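(* For all $n\ge2$, $B(n)=a(n-2)+2$.
   Context: $\mathbb{N}=\{0,1,2,\dots\}$. Quet's sequence $A:\mathbb{N}\to\mathbb{N}$ is defined by $A(0)=0$, $A(1)=1$, and for $n\ge1$, $A(n+1)$ is the least natural number such that $A(n+1)\notin\{A(0),\dots,A(n)\}$ and $\sum_{0\le i\le n+1}A(i)\equiv 0 \pmod{n}$. Define $B(0)=0$, $B(1)=1$, and $B(n)=\frac{1}{n-1}\sum_{0\le i\le n}A(i)$ for $n\ge2$ (an integer by the defining congruence); first values $B=0,1,3,3,4,4,5,5,6,7,7,\dots$. Hofstadter's "married" sequences $a,b:\mathbb{N}\to\mathbb{N}$ are defined by $a(0)=1$, $b(0)=0$ and, for $n\ge1$, $b(n)=n-a(b(n-1))$ and $a(n)=n-b(a(n-1))$ (computing $b(n)$ before $a(n)$ at each step); first values $a=1,1,2,2,3,3,4,5,5,6,6,\dots$. *)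

theory Defs
  imports Main
begin

text \<open>Quet's sequence: Aseq n is the list [A(0), ..., A(n)].\<close>
fun Aseq :: "nat \<Rightarrow> nat list" where
  "Aseq 0 = [0]"
| "Aseq (Suc 0) = [0, 1]"
| "Aseq (Suc (Suc k)) =
     (let xs = Aseq (Suc k)
      in xs @ [LEAST x. x \<notin> set xs \<and> (sum_list xs + x) mod (Suc k) = 0])"

definition A :: "nat \<Rightarrow> nat" where
  "A n = Aseq n ! n"

definition B :: "nat \<Rightarrow> nat" where
  "B n = (if n = 0 then 0 else if n = 1 then 1
          else (\<Sum>i\<le>n. A i) div (n - 1))"

text \<open>Hofstadter's married sequences: ABseq n = ([a(0..n)], [b(0..n)]).\<close>
fun ABseq :: "nat \<Rightarrow> nat list \<times> nat list" where
  "ABseq 0 = ([1], [0])"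
| "ABseq (Suc m) =
     (let (as, bs) = ABseq m;
          bn = Suc m - as ! (bs ! m);
          bs' = bs @ [bn];
          an = Suc m - bs' ! (as ! m)
      in (as @ [an], bs'))"

definition ha :: "nat \<Rightarrow> nat" where
  "ha n = fst (ABseq n) ! n"

definition hb :: "nat \<Rightarrow> nat" where
  "hb n = snd (ABseq n) ! n"


end

theory Submission
  imports Defs
begin

lemma ABseq_len: "length (fst (ABseq m)) = Suc m \<and> length (snd (ABseq m)) = Suc m"
  by (induction m) (auto simp: Let_def split: prod.splits)

lemma ABseq_Suc:
  "fst (ABseq (Suc m)) = fst (ABseq m) @ [Suc m - (snd (ABseq m) @ [Suc m - fst (ABseq m) ! (snd (ABseq m) ! m)]) ! (fst (ABseq m) ! m)]"
  "snd (ABseq (Suc m)) = snd (ABseq m) @ [Suc m - fst (ABseq m) ! (snd (ABseq m) ! m)]"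
  by (auto simp: Let_def split: prod.splits)

declare ABseq.simps(2)[simp del]

lemma ABseq_pre: "i \<le> n \<Longrightarrow> fst (ABseq n) ! i = ha i \<and> snd (ABseq n) ! i = hb i"
proof (induction n)
  case 0
  then show ?case by (simp add: ha_def hb_def)
next
  case (Suc n)
  show ?case
  proof (cases "i = Suc n")
    case True
    then show ?thesis by (simp add: ha_def hb_def)
  next
    case False
    then have "i \<le> n" using Suc.prems by simp
    then show ?thesis using Suc.IH ABseq_len[of n]
      by (simp add: ABseq_Suc nth_append)
  qed
qed

lemma hb_le: "hb m \<le> m"
  by (cases m) (simp_all add: hb_def ABseq_Suc ABseq_len[THEN conjunct2] nth_append)

lemma ha_le: "ha m \<le> Suc m"
  by (cases m) (simp_all add: ha_def ABseq_Suc ABseq_len nth_append)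

lemma hb_rec: "hb (Suc m) + ha (hb m) = Suc m"
proof -
  have "hb (Suc m) = Suc m - ha (hb m)"
    using ABseq_pre[of m m] ABseq_pre[of "hb m" m] hb_le[of m]
    by (simp add: hb_def[of "Suc m"] ABseq_Suc ABseq_len nth_append)
  moreover have "ha (hb m) \<le> Suc m" using ha_le[of "hb m"] hb_le[of m] by simp
  ultimately show ?thesis by simp
qed

lemma ha_rec: "ha (Suc m) + hb (ha m) = Suc m"
proof -
  have "ha (Suc m) = Suc m - hb (ha m)"
  proof -
    have "fst (ABseq m) ! m = ha m" using ABseq_pre[of m m] by simp
    moreover have "snd (ABseq (Suc m)) ! (ha m) = hb (ha m)"
      using ABseq_pre[of "ha m" "Suc m"] ha_le[of m] by simp
    ultimately show ?thesis
      by (simp add: ha_def[of "Suc m"] ABseq_Suc ABseq_len nth_append)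
  qed
  moreover have "hb (ha m) \<le> Suc m" using hb_le[of "ha m"] ha_le[of m] by simp
  ultimately show ?thesis by simp
qed

lemma ha0: "ha 0 = 1" by (simp add: ha_def)
lemma hb0: "hb 0 = 0" by (simp add: hb_def)

lemma steps: "(hb (Suc n) = hb n \<or> hb (Suc n) = Suc (hb n)) \<and> (ha (Suc n) = ha n \<or> ha (Suc n) = Suc (ha n))"
proof (induction n rule: less_induct)
  case (less n)
  show ?case
  proof (cases n)
    case 0
    have "hb 1 = 0" using hb_rec[of 0] by (simp add: hb0 ha0)
    moreover have "ha 1 = 1" using ha_rec[of 0] \<open>hb 1 = 0\<close> by (simp add: ha0)
    ultimately show ?thesis using 0 by (simp add: ha0 hb0)
  next
    case (Suc p)
    have r1: "hb (Suc n) + ha (hb n) = Suc n" by (rule hb_rec)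
    have r2: "hb n + ha (hb p) = n" using hb_rec[of p] Suc by simp
    have ihp: "(hb n = hb p \<or> hb n = Suc (hb p)) \<and> (ha n = ha p \<or> ha n = Suc (ha p))"
      using less[of p] Suc by simp
    have B: "hb (Suc n) = hb n \<or> hb (Suc n) = Suc (hb n)"
    proof (cases "hb n = hb p")
      case True then show ?thesis using r1 r2 by simp
    next
      case False
      then have e: "hb n = Suc (hb p)" using ihp by simp
      have "hb p < n" using hb_le[of p] Suc by simp
      then have "ha (Suc (hb p)) = ha (hb p) \<or> ha (Suc (hb p)) = Suc (ha (hb p))" using less by blast
      then show ?thesis using r1 r2 e by auto
    qed
    have r3: "ha (Suc n) + hb (ha n) = Suc n" by (rule ha_rec)
    have r4: "ha n + hb (ha p) = n" using ha_rec[of p] Suc by simp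
    have A: "ha (Suc n) = ha n \<or> ha (Suc n) = Suc (ha n)"
    proof (cases "ha n = ha p")
      case True then show ?thesis using r3 r4 by simp
    next
      case False
      then have e: "ha n = Suc (ha p)" using ihp by simp
      have "ha p \<le> n" using ha_le[of p] Suc by simp
      then have "hb (Suc (ha p)) = hb (ha p) \<or> hb (Suc (ha p)) = Suc (hb (ha p))"
        using less B by (cases "ha p = n") auto
      then show ?thesis using r3 r4 e by auto
    qed
    show ?thesis using A B by simp
  qed
qed

lemma ha_mono: "i \<le> j \<Longrightarrow> ha i \<le> ha j"
proof (induction j rule: dec_induct)
  case (step n)
  then show ?case using steps[of n] by auto
qed simp

lemma ha_pos: "ha i \<ge> 1"
  using ha_mono[of 0 i] ha0 by simp

lemma ha_strict: "i < j \<Longrightarrow> ha i + i < ha j + j"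
  using ha_mono[of i j] by simp

lemma I12: "hb (ha i + i) = i \<and> (ha (Suc i) = Suc (ha i) \<longrightarrow> hb (ha i + i + 1) = i + 1)"
proof (induction i)
  case 0
  have "hb 1 = 0" using hb_rec[of 0] by (simp add: hb0 ha0)
  moreover have "ha 1 = 1" using ha_rec[of 0] \<open>hb 1 = 0\<close> by (simp add: ha0)
  ultimately show ?case by (simp add: ha0)
next
  case (Suc i)
  have P1: "hb (ha (Suc i) + Suc i) = Suc i"
  proof (cases "ha (Suc i) = ha i")
    case True
    have "hb (Suc (ha i + i)) + ha (hb (ha i + i)) = Suc (ha i + i)" by (rule hb_rec)
    then show ?thesis using Suc.IH True by simp
  next
    case False
    then have e: "ha (Suc i) = Suc (ha i)" using steps[of i] by simp
    have "hb (Suc (ha i + i + 1)) + ha (hb (ha i + i + 1)) = Suc (ha i + i + 1)" by (rule hb_rec)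
    then show ?thesis using Suc.IH e by simp
  qed
  moreover have "ha (Suc (Suc i)) = Suc (ha (Suc i)) \<longrightarrow> hb (ha (Suc i) + Suc i + 1) = Suc i + 1"
  proof
    have "hb (Suc (ha (Suc i) + Suc i)) + ha (hb (ha (Suc i) + Suc i)) = Suc (ha (Suc i) + Suc i)" by (rule hb_rec)
    then show "hb (ha (Suc i) + Suc i + 1) = Suc i + 1" using P1 by simp
  qed
  ultimately show ?case by simp
qed

lemma cover: "v \<ge> 1 \<Longrightarrow> \<exists>i. v = ha i + i \<or> (v = ha i + i + 1 \<and> ha (Suc i) = Suc (ha i))"
proof (induction v rule: dec_induct)
  case base
  then show ?case by (rule exI[of _ 0]) (simp add: ha0)
next
  case (step v)
  then obtain i where i: "v = ha i + i \<or> (v = ha i + i + 1 \<and> ha (Suc i) = Suc (ha i))" by blast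
  then show ?case
  proof
    assume v: "v = ha i + i"
    show ?case
    proof (cases "ha (Suc i) = Suc (ha i)")
      case True then show ?thesis using v by (intro exI[of _ i]) simp
    next
      case False
      then have "ha (Suc i) = ha i" using steps[of i] by simp
      then show ?thesis using v by (intro exI[of _ "Suc i"]) simp
    qed
  next
    assume "v = ha i + i + 1 \<and> ha (Suc i) = Suc (ha i)"
    then show ?case by (intro exI[of _ "Suc i"]) simp
  qed
qed

lemma key:
  assumes inc: "ha (Suc p) = Suc (ha p)"
  shows "(\<exists>i. ha (Suc i) = Suc (ha i) \<and> ha i + i + 2 = ha (Suc p)) \<longleftrightarrow> ha (Suc (Suc p)) = Suc (ha (Suc p))"
proof -
  define v where "v = ha p"
  have r1: "ha (Suc (Suc p)) + hb (Suc v) = Suc (Suc p)" using ha_rec[of "Suc p"] inc v_def by simp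
  have r2: "ha (Suc p) + hb v = Suc p" using ha_rec[of p] v_def by simp
  have eq: "ha (Suc (Suc p)) = Suc (ha (Suc p)) \<longleftrightarrow> hb (Suc v) = hb v" using r1 r2 by linarith
  show ?thesis
  proof
    assume "\<exists>i. ha (Suc i) = Suc (ha i) \<and> ha i + i + 2 = ha (Suc p)"
    then obtain i where i1: "ha (Suc i) = Suc (ha i)" and i2: "ha i + i + 2 = ha (Suc p)" by blast
    have vv: "v = ha i + i + 1" using i2 inc v_def by simp
    have "hb v = i + 1" using I12[of i] i1 vv by simp
    moreover have "hb (Suc v) = i + 1" using I12[of "Suc i"] i1 vv by simp
    ultimately show "ha (Suc (Suc p)) = Suc (ha (Suc p))" using eq by simp
  next
    assume "ha (Suc (Suc p)) = Suc (ha (Suc p))"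
    then have hv: "hb (Suc v) = hb v" using eq by simp
    have "v \<ge> 1" using ha_pos v_def by simp
    then obtain i where i: "v = ha i + i \<or> (v = ha i + i + 1 \<and> ha (Suc i) = Suc (ha i))" using cover by blast
    then show "\<exists>i. ha (Suc i) = Suc (ha i) \<and> ha i + i + 2 = ha (Suc p)"
    proof
      assume v: "v = ha i + i"
      have "hb v = i" using I12[of i] v by simp
      moreover have "hb (Suc v) = Suc i"
      proof (cases "ha (Suc i) = Suc (ha i)")
        case True then show ?thesis using I12[of i] v by simp
      next
        case False
        then have "ha (Suc i) = ha i" using steps[of i] by simp
        then show ?thesis using I12[of "Suc i"] v by simp
      qed
      ultimately show ?thesis using hv by simp
    next
      assume "v = ha i + i + 1 \<and> ha (Suc i) = Suc (ha i)"
      then show ?thesis using inc v_def by (intro exI[of _ i]) simp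
    qed
  qed
qed

lemma notriple: "ha (Suc k) = ha k \<Longrightarrow> ha (Suc (Suc k)) = Suc (ha (Suc k))"
  using ha_rec[of k] ha_rec[of "Suc k"] by simp

lemma Aseq_len: "length (Aseq n) = Suc n"
proof (induction n rule: Aseq.induct)
qed (simp_all add: Let_def)

lemma Aseq_snoc: "Aseq (Suc n) = Aseq n @ [A (Suc n)]"
proof (cases n)
  case 0
  then show ?thesis by (simp add: A_def)
next
  case (Suc k)
  then show ?thesis using Aseq_len[of "Suc k"] by (simp add: A_def Let_def nth_append)
qed

lemma Aseq_map: "Aseq n = map A [0..<Suc n]"
proof (induction n)
  case 0
  then show ?case by (simp add: A_def)
next
  case (Suc n)
  then show ?case by (simp add: Aseq_snoc del: Aseq.simps upt_Suc) (simp)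
qed

lemma A_step: "A (Suc (Suc k)) = (LEAST x. x \<notin> A ` {..Suc k} \<and> (sum A {..Suc k} + x) mod Suc k = 0)"
proof -
  have "A (Suc (Suc k)) = (LEAST x. x \<notin> set (Aseq (Suc k)) \<and> (sum_list (Aseq (Suc k)) + x) mod Suc k = 0)"
    using Aseq_len[of "Suc k"] by (simp add: A_def Let_def nth_append del: Aseq.simps(2))
  moreover have "set (Aseq (Suc k)) = A ` {..Suc k}"
    by (simp only: Aseq_map set_map set_upt atLeast0LessThan lessThan_Suc_atMost)
  moreover have "sum_list (Aseq (Suc k)) = sum A {..Suc k}"
    by (simp only: Aseq_map interv_sum_list_conv_sum_set_nat set_upt atLeast0LessThan lessThan_Suc_atMost)
  ultimately show ?thesis by simp
qed

lemma A0: "A 0 = 0" by (simp add: A_def)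
lemma A1: "A 1 = 1" by (simp add: A_def)
lemma A2: "A 2 = 2"
proof -
  have "A (Suc (Suc 0)) = (LEAST x. x \<notin> A ` {..Suc 0} \<and> (sum A {..Suc 0} + x) mod Suc 0 = 0)"
    by (rule A_step)
  also have "A ` {..Suc 0} = {0, 1}" using A0 A1 by (auto simp: atMost_Suc)
  also have "(LEAST x. x \<notin> {0::nat, 1} \<and> (sum A {..Suc 0} + x) mod Suc 0 = 0) = 2"
    by (rule Least_equality) auto
  finally show ?thesis by (simp add: numeral_2_eq_2)
qed

definition C :: "nat \<Rightarrow> nat" where "C m = ha (m - 2) + 2"
definition T :: "nat \<Rightarrow> nat" where "T m = (if C (Suc m) = C m then C m else C m + m)"

lemma C_SS: "C (Suc (Suc k)) = ha k + 2" by (simp add: C_def)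

lemma T_SS: "T (Suc (Suc i)) = (if ha (Suc i) = ha i then ha i + 2 else ha i + i + 4)"
  by (simp add: T_def C_def)

lemma stepA:
  assumes IH: "\<forall>j. 2 \<le> j \<and> j < Suc (Suc k) \<longrightarrow> A (Suc j) = T j"
  and S: "sum A {..Suc (Suc k)} = Suc k * C (Suc (Suc k))"
  shows "A (Suc (Suc (Suc k))) = T (Suc (Suc k))"
proof -
  define m where "m = Suc (Suc k)"
  define c where "c = ha k + 2"
  define U where "U = A ` {..m}"
  have mem: "x \<in> U \<longleftrightarrow> x \<le> 2 \<or> (\<exists>i<k. x = T (Suc (Suc i)))" for x
  proof
    assume "x \<in> U"
    then obtain y where y: "y \<le> m" "x = A y" unfolding U_def by blast
    show "x \<le> 2 \<or> (\<exists>i<k. x = T (Suc (Suc i)))"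
    proof (cases "y \<le> 2")
      case True
      then have "y = 0 \<or> y = 1 \<or> y = 2" by auto
      then show ?thesis using y A0 A1 A2 by auto
    next
      case False
      define i where "i = y - 3"
      have i: "y = Suc (Suc (Suc i))" using False i_def by simp
      then have "i < k" using y m_def by simp
      moreover have "x = T (Suc (Suc i))" using IH[rule_format, of "Suc (Suc i)"] i y m_def by simp
      ultimately show ?thesis by blast
    qed
  next
    assume "x \<le> 2 \<or> (\<exists>i<k. x = T (Suc (Suc i)))"
    then show "x \<in> U"
    proof
      assume "x \<le> 2"
      then have "x = 0 \<or> x = 1 \<or> x = 2" by auto
      then have "x = A x \<and> x \<le> m" using A0 A1 A2 m_def by auto
      then show ?thesis unfolding U_def by blast
    next
      assume "\<exists>i<k. x = T (Suc (Suc i))"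
      then obtain i where "i < k" "x = T (Suc (Suc i))" by blast
      then have "x = A (Suc (Suc (Suc i)))" "Suc (Suc (Suc i)) \<le> m"
        using IH[rule_format, of "Suc (Suc i)"] m_def by auto
      then show ?thesis unfolding U_def by blast
    qed
  qed
  have Tm: "T m = (if ha (Suc k) = ha k then c else c + m)"
    using T_SS[of k] m_def c_def by simp
  have c3: "c \<ge> 3" using ha_pos[of k] c_def by simp
  have ck: "c \<le> k + 3" using ha_le[of k] c_def by simp
  have Tlt: "T (Suc (Suc i)) < c + m" if "i < k" for i
    using T_SS[of i] ha_mono[of i k] that c_def m_def by auto
  have cm_notin: "c + m \<notin> U"
  proof
    assume "c + m \<in> U"
    then have "c + m \<le> 2 \<or> (\<exists>i<k. c + m = T (Suc (Suc i)))" using mem by blast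
    then show False using Tlt c3 by (metis add_leD1 le_trans linorder_not_le numeral_2_eq_2 numeral_3_eq_3 less_irrefl lessI less_imp_le)
  qed
  have case1: "c \<notin> U" if h: "ha (Suc k) = ha k"
  proof
    assume "c \<in> U"
    then obtain i where i: "i < k" "c = T (Suc (Suc i))" using mem c3 by auto
    then obtain p where p: "k = Suc p" by (cases k) auto
    have np: "ha (Suc p) \<noteq> ha p" using notriple[of p] h p by auto
    then have inc: "ha (Suc p) = Suc (ha p)" using steps[of p] by simp
    show False
    proof (cases "ha (Suc i) = ha i")
      case True
      then have "ha i = ha k" using i T_SS[of i] c_def by simp
      moreover have "ha i \<le> ha p" "ha p \<le> ha k" using ha_mono i p by auto
      ultimately show False using np p by simp
    next
      case False
      then have "ha (Suc i) = Suc (ha i)" using steps[of i] by simp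
      moreover have "ha i + i + 2 = ha (Suc p)" using i T_SS[of i] c_def p False by simp
      ultimately have "ha (Suc (Suc p)) = Suc (ha (Suc p))" using key[OF inc] by blast
      then show False using h p by simp
    qed
  qed
  have case2: "c \<in> U" if h: "ha (Suc k) = Suc (ha k)"
  proof -
    obtain p where p: "k = Suc p" using h ha0 hb0 ha_rec[of 0] hb_rec[of 0] by (cases k) auto
    show ?thesis
    proof (cases "ha (Suc p) = ha p")
      case True
      then have "c = T (Suc (Suc p))" using T_SS[of p] c_def p by simp
      then show ?thesis using mem p by auto
    next
      case False
      then have inc: "ha (Suc p) = Suc (ha p)" using steps[of p] by simp
      obtain i where i1: "ha (Suc i) = Suc (ha i)" and i2: "ha i + i + 2 = ha (Suc p)"
        using key[OF inc] h p by blast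
      have "i < k"
      proof (rule ccontr)
        assume "\<not> i < k"
        then have "ha k \<le> ha i" using ha_mono by simp
        then show False using i2 p by simp
      qed
      moreover have "c = T (Suc (Suc i))" using T_SS[of i] i1 i2 c_def p by simp
      ultimately show ?thesis using mem by auto
    qed
  qed
  have SS: "sum A {..m} = Suc k * c" using S m_def c_def C_SS by simp
  have "A (Suc m) = (LEAST x. x \<notin> U \<and> (sum A {..m} + x) mod m = 0)"
    using A_step[of "Suc k"] m_def U_def by simp
  also have "\<dots> = T m"
  proof (rule Least_equality)
    have "Suc k * c + T m = m * c \<or> Suc k * c + T m = m * (c + 1)"
      using Tm m_def by (auto simp: algebra_simps)
    then have "(Suc k * c + T m) mod m = 0" by auto
    moreover have "T m \<notin> U" using Tm case1 cm_notin by auto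
    ultimately show "T m \<notin> U \<and> (sum A {..m} + T m) mod m = 0" using SS by simp
  next
    fix y assume y: "y \<notin> U \<and> (sum A {..m} + y) mod m = 0"
    have "\<not> y \<le> 2" using y mem by blast
    then have y3: "y \<ge> 3" by simp
    have d1: "m dvd (Suc k * c + y)" using y SS by (simp add: dvd_eq_mod_eq_0)
    have "Suc k * c + c = m * c" using m_def by simp
    then have d2: "m dvd (Suc k * c + c)" by simp
    have yc: "y = c" if ylt: "y < c + m"
    proof (cases "c \<le> y")
      case True
      have "m dvd (Suc k * c + y) - (Suc k * c + c)" using dvd_diff_nat[OF d1 d2] .
      then have "m dvd (y - c)" by simp
      moreover have "y - c < m" using ylt True by linarith
      ultimately have "y - c = 0" using nat_dvd_not_less by (metis gr0I)
      then show ?thesis using True by simp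
    next
      case False
      have "m dvd (Suc k * c + c) - (Suc k * c + y)" using dvd_diff_nat[OF d2 d1] .
      then have "m dvd (c - y)" by simp
      moreover have "c - y < m" "c - y > 0" using False ck y3 m_def by auto
      ultimately show ?thesis using nat_dvd_not_less by blast
    qed
    show "T m \<le> y"
    proof (rule ccontr)
      assume "\<not> T m \<le> y"
      then have lt: "y < T m" by simp
      then have yc: "y = c" using yc Tm by (simp split: if_splits)
      show False
      proof (cases "ha (Suc k) = ha k")
        case True then show False using lt yc Tm by simp
      next
        case False
        then have "ha (Suc k) = Suc (ha k)" using steps[of k] by simp
        then show False using case2 y yc by simp
      qed
    qed
  qed
  finally show ?thesis using m_def by simp
qed

lemma mainA: "sum A {..Suc (Suc k)} = Suc k * C (Suc (Suc k)) \<and> (\<forall>j. 2 \<le> j \<and> j < Suc (Suc k) \<longrightarrow> A (Suc j) = T j)"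
proof (induction k)
  case 0
  have "sum A {..Suc (Suc 0)} = A 0 + A 1 + A 2" by (simp add: atMost_Suc numeral_2_eq_2)
  then have "sum A {..Suc (Suc 0)} = 3" using A0 A1 A2 by simp
  moreover have "C (Suc (Suc 0)) = 3" using C_SS[of 0] ha0 by simp
  ultimately show ?case by simp
next
  case (Suc k)
  have st: "A (Suc (Suc (Suc k))) = T (Suc (Suc k))" using stepA Suc.IH by blast
  have all: "\<forall>j. 2 \<le> j \<and> j < Suc (Suc (Suc k)) \<longrightarrow> A (Suc j) = T j"
    using Suc.IH st less_Suc_eq by auto
  have "sum A {..Suc (Suc (Suc k))} = Suc k * C (Suc (Suc k)) + T (Suc (Suc k))"
    using Suc.IH st by simp
  also have "\<dots> = Suc (Suc k) * C (Suc (Suc (Suc k)))"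
    using steps[of k] by (auto simp: T_SS C_SS)
  finally show ?case using all by simp
qed

theorem theorem10:
  fixes n :: nat
  assumes "n \<ge> 2"
  shows "B n = ha (n - 2) + 2"
proof -
  obtain k where k: "n = Suc (Suc k)" using assms by (metis add_2_eq_Suc le_Suc_ex)
  have "B n = sum A {..n} div Suc k" using k by (simp add: B_def)
  also have "\<dots> = (Suc k * C n) div Suc k" using mainA[of k] k by (simp only:)
  also have "\<dots> = C n" by (rule nonzero_mult_div_cancel_left) simp
  finally show ?thesis by (simp add: C_def)
qed

end
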